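(* For non-negative integers $n$ let $$S_n=\sum_{k=0}^{n-3}(-1)^k\binom{2k}{k}\binom{n-3}{k}\binom{k}{n-k-3}$$ (so $S_0=S_1=S_2=0$, the sum being empty). Then for every non-negative integer $n$, $$S_{3n}\equiv S_{3n+1}\equiv -S_{3n+2}\pmod 3,\qquad S_{4n+2}\equiv 0\pmod 4,$$ and for every positive integer $n$, $$S_{n+2}+12S_{n+1}+16S_n\equiv 0\pmod n.$$
   Context: Binomial coefficients $\binom{a}{b}$ are zero when $b<0$ or $b>a$. *)

theory Defs
  imports Main "HOL-Number_Theory.Cong"
begin

text \<open>S n = sum over k = 0..n-3 of (-1)^k C(2k,k) C(n-3,k) C(k,n-k-3); empty for n < 3.
  The index set {..< n-2} (nat subtraction) is exactly {0..n-3} when n \<ge> 3 and empty otherwise.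
  Within the range, n-k-3 \<ge> 0, so nat subtraction is exact there.\<close>
definition S :: "nat \<Rightarrow> int" where
  "S n = (\<Sum>k<n-2. (-1)^k * int ((2*k) choose k) * int ((n-3) choose k) * int (k choose (n-3-k)))"

end

theory Submission
  imports Defs "HOL-Computational_Algebra.Polynomial"
begin


definition a :: "nat \<Rightarrow> int" where "a k = (-1)^k * int ((2*k) choose k)"

lemma central_rec: "Suc k * ((2*Suc k) choose Suc k) = 2*(2*k+1)*((2*k) choose k)"
proof -
  have 1: "Suc k * (Suc (Suc (2*k)) choose Suc k) = Suc (Suc (2*k)) * (Suc (2*k) choose k)"
    using Suc_times_binomial[of k "Suc(2*k)"] by simp
  have 2: "Suc (2*k) * ((2*k) choose k) = (Suc (2*k) choose Suc k) * Suc k"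
    using Suc_times_binomial_eq by simp
  have 3: "(Suc (2*k) choose Suc k) = (Suc (2*k) choose k)"
    using binomial_symmetric[of "Suc k" "Suc (2*k)"] by simp
  have "Suc k * ((2*Suc k) choose Suc k) = 2 * (Suc k * (Suc (2*k) choose k))"
    using 1 by simp
  also have "\<dots> = 2*(2*k+1)*((2*k) choose k)" using 2 3 by (simp add: mult.commute)
  finally show ?thesis .
qed

lemma a_rec: "int (Suc k) * a (Suc k) = - (4 * int k + 2) * a k"
proof -
  obtain C1 C0 where c1: "C1 = (2*Suc k) choose Suc k" and c0: "C0 = (2*k) choose k" by blast
  have h: "Suc k * C1 = 2*(2*k+1)*C0" using central_rec[of k] c1 c0 by (simp only:)
  have "int (Suc k * C1) = int (2*(2*k+1)*C0)" using h by (simp only:)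
  then have e: "int (Suc k) * int C1 = (4 * int k + 2) * int C0"
    by (simp add: algebra_simps)
  have e2: "(-1)^k * (int (Suc k) * int C1) = (-1)^k * ((4 * int k + 2) * int C0)" using e by simp
  show ?thesis unfolding a_def c1[symmetric] c0[symmetric] using e2 by (simp add: algebra_simps)
qed

definition Lf :: "int poly \<Rightarrow> int" where "Lf q = (\<Sum>k\<le>degree q. coeff q k * a k)"

lemma Lf_le: "degree q \<le> N \<Longrightarrow> Lf q = (\<Sum>k\<le>N. coeff q k * a k)"
  unfolding Lf_def by (rule sum.mono_neutral_left) (auto simp: coeff_eq_0)

lemma Lf_0 [simp]: "Lf 0 = 0" by (simp add: Lf_def)

lemma Lf_add: "Lf (p + q) = Lf p + Lf q"
proof -
  define N where "N = max (degree p) (degree q)"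
  have "degree (p+q) \<le> N" unfolding N_def by (rule degree_add_le) auto
  then show ?thesis using Lf_le[of p N] Lf_le[of q N] Lf_le[of "p+q" N]
    by (simp add: N_def sum.distrib algebra_simps)
qed

lemma Lf_smult: "Lf (smult c p) = c * Lf p"
proof -
  have "degree (smult c p) \<le> degree p" by (rule degree_smult_le)
  then show ?thesis using Lf_le[of "smult c p" "degree p"]
    by (simp add: Lf_def sum_distrib_left algebra_simps)
qed

lemma Lf_minus: "Lf (- p) = - Lf p"
  using Lf_smult[of "-1" p] by simp

lemma Lf_diff: "Lf (p - q) = Lf p - Lf q"
  using Lf_add[of p "-q"] Lf_minus[of q] by simp

lemma Lf_sum: "Lf (\<Sum>i\<in>A. f i) = (\<Sum>i\<in>A. Lf (f i))"
  by (induction A rule: infinite_finite_induct) (auto simp: Lf_add)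

lemma Lf_monom: "Lf (monom c k) = c * a k"
proof -
  have "Lf (monom c k) = (\<Sum>i\<le>k. coeff (monom c k) i * a i)"
    by (rule Lf_le) (rule degree_monom_le)
  also have "\<dots> = (\<Sum>i\<le>k. (if i = k then c * a k else 0))"
    by (rule sum.cong) (auto simp: coeff_monom)
  finally show ?thesis by simp
qed

lemma Lf_const_mult: "Lf ([:c:] * p) = c * Lf p"
  by (simp add: Lf_smult)

definition dw1 :: "int poly \<Rightarrow> int poly" where
  "dw1 q = [:2,1:] * q + [:0,4,1:] * pderiv q"

lemma dw1_add: "dw1 (p + q) = dw1 p + dw1 q"
  unfolding dw1_def pderiv_add by algebra

lemma dw1_0: "dw1 0 = 0" by (simp add: dw1_def)

lemma dw1_sum: "dw1 (\<Sum>i\<in>A. f i) = (\<Sum>i\<in>A. dw1 (f i))"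
  by (induction A rule: infinite_finite_induct) (auto simp: dw1_add dw1_0)

lemma dw1_alt: "dw1 q = smult 2 q + pCons 0 q + pCons 0 (smult 4 (pderiv q) + pCons 0 (pderiv q))"
  by (simp add: dw1_def)

lemma dw1_monom: "dw1 (monom c k) = monom (c * int (Suc k)) (Suc k) + monom (c * (4 * int k + 2)) k"
proof (cases k)
  case 0
  then show ?thesis
    by (simp add: dw1_alt pderiv_monom monom_0 monom_Suc smult_monom algebra_simps)
next
  case (Suc j)
  have d: "pderiv (monom c k) = monom (int k * c) j" using Suc by (simp add: pderiv_monom)
  have "dw1 (monom c k) = monom (2*c) k + monom c (Suc k)
      + (monom (4 * (int k * c)) k + monom (int k * c) (Suc k))"
  proof -
    have p: "pCons 0 (monom b j) = monom b k" for b :: int using Suc by (simp add: monom_Suc)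
    have p2: "pCons 0 (monom b k) = monom b (Suc k)" for b :: int by (simp add: monom_Suc)
    have p3: "pCons 0 (x + y) = pCons 0 x + pCons 0 y" for x y :: "int poly" by simp
    show ?thesis unfolding dw1_alt d by (simp add: smult_monom p p2 p3)
  qed
  also have "\<dots> = monom (2*c + 4 * (int k * c)) k + monom (c + int k * c) (Suc k)"
    by (simp add: add_monom[symmetric] algebra_simps)
  also have "\<dots> = monom (c * int (Suc k)) (Suc k) + monom (c * (4 * int k + 2)) k"
    by (simp add: algebra_simps)
  finally show ?thesis .
qed

lemma Lf_dw1: "Lf (dw1 q) = 0"
proof -
  have "dw1 q = (\<Sum>i\<le>degree q. dw1 (monom (coeff q i) i))"
    by (subst poly_as_sum_of_monoms[symmetric, of q]) (rule dw1_sum)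
  then have "Lf (dw1 q) = (\<Sum>i\<le>degree q. Lf (dw1 (monom (coeff q i) i)))"
    by (simp add: Lf_sum)
  also have "\<dots> = 0"
  proof (rule sum.neutral, rule ballI)
    fix i
    have "Lf (dw1 (monom (coeff q i) i)) = coeff q i * (int (Suc i) * a (Suc i) + (4 * int i + 2) * a i)"
      by (simp add: dw1_monom Lf_add Lf_monom algebra_simps)
    also have "\<dots> = 0" by (simp only: a_rec) (simp add: algebra_simps)
    finally show "Lf (dw1 (monom (coeff q i) i)) = 0" .
  qed
  finally show ?thesis .
qed




lemma central_even: "j \<ge> 1 \<Longrightarrow> 2 dvd ((2*j) choose j)"
proof -
  assume "j \<ge> 1"
  then obtain i where j: "j = Suc i" by (cases j) auto
  have "(2*j) choose j = (Suc (2*i+1) choose Suc i)" using j by simp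
  also have "\<dots> = ((2*i+1) choose i) + ((2*i+1) choose Suc i)" by simp
  also have "(2*i+1) choose Suc i = (2*i+1) choose i"
    using binomial_symmetric[of "Suc i" "2*i+1"] by simp
  finally show ?thesis by simp
qed

lemma central_odd4: assumes "odd m" "m \<ge> 3" shows "4 dvd ((2*m) choose m)"
proof -
  obtain k where m: "m = Suc k" using assms by (cases m) auto
  have k1: "k \<ge> 1" using assms m by simp
  have "2 dvd ((2*k) choose k)" using central_even k1 by simp
  then have "4 dvd 2*(2*k+1)*((2*k) choose k)" by auto
  then have "4 dvd Suc k * ((2*Suc k) choose Suc k)" by (simp only: central_rec)
  then have "4 dvd m * ((2*m) choose m)" using m by (simp only:)
  moreover have "coprime (4::nat) m"
  proof -
    have "coprime (2::nat) m" using assms by simp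
    then have "coprime ((2::nat)*2) m" by (simp only: coprime_mult_left_iff)
    then show ?thesis by (metis mult_2 numeral_Bit0)
  qed
  ultimately show ?thesis using coprime_dvd_mult_right_iff by blast
qed

lemma term4: assumes "odd m" "m \<ge> 3" "k \<le> m"
  shows "4 dvd ((2*k) choose k) * (m choose k) * (k choose (m-k))"
proof (cases "k = m")
  case True
  then show ?thesis using central_odd4[OF assms(1,2)] by simp
next
  case False
  show ?thesis
  proof (cases "m - k \<le> k")
    case False
    then show ?thesis by (simp add: binomial_eq_0)
  next
    case True
    define j where "j = m - k"
    have j1: "j \<ge> 1" using \<open>k \<noteq> m\<close> assms j_def by simp
    have k1: "k \<ge> 1" using True j1 j_def by simp
    have mj: "m - j = k" using j_def assms by simp
    have "(m choose (2*j)) * ((2*j) choose j) = (m choose j) * ((m - j) choose (2*j - j))"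
      by (rule choose_mult) (use True j_def in auto)
    also have "m choose j = m choose k" using binomial_symmetric[of k m] assms j_def by simp
    finally have e: "(m choose k) * (k choose j) = (m choose (2*j)) * ((2*j) choose j)"
      using mj by simp
    have "2 dvd ((2*k) choose k)" using central_even k1 by simp
    moreover have "2 dvd ((2*j) choose j)" using central_even j1 by simp
    ultimately have "4 dvd ((2*k) choose k) * ((m choose (2*j)) * ((2*j) choose j))"
      by (metis dvd_mult dvd_mult2 mult_dvd_mono numeral_Bit0_eq_double mult_2)
    then show ?thesis using e j_def by (simp add: mult.assoc)
  qed
qed

lemma partb: "[S (4*n+2) = 0] (mod 4)"
proof (cases n)
  case 0
  then show ?thesis by (simp add: S_def)
next
  case (Suc i)
  define m where "m = 4*n - 1"
  have m3: "m \<ge> 3" "odd m" using Suc m_def by auto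
  have eq: "S (4*n+2) = (\<Sum>k<m+1. (-1)^k * int ((2*k) choose k) * int (m choose k) * int (k choose (m-k)))"
    unfolding S_def using Suc m_def by (simp add: Suc_diff_le)
  have "(4::int) dvd (\<Sum>k<m+1. (-1)^k * int ((2*k) choose k) * int (m choose k) * int (k choose (m-k)))"
  proof (rule dvd_sum)
    fix k assume "k \<in> {..<m+1}"
    then have "k \<le> m" by simp
    from term4[OF m3(2) m3(1) this] have "int 4 dvd int (((2*k) choose k) * (m choose k) * (k choose (m-k)))"
      using int_dvd_int_iff by blast
    then show "(4::int) dvd (-1)^k * int ((2*k) choose k) * int (m choose k) * int (k choose (m-k))"
      by (simp add: mult.assoc)
  qed
  then show ?thesis using eq by (simp add: cong_0_iff)
qed




definition Wc :: "int poly" where "Wc = [:0,1:]"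
definition Wp :: "int poly poly" where "Wp = [:Wc:]"
definition Xp :: "int poly poly" where "Xp = [:0,1:]"
definition PP :: "int poly poly" where "PP = 1 + Wp*Xp + Wp*Xp^2"

lemma coeff_lin_pow: "coeff ([:1,1:]^k) i = (of_nat (k choose i) :: 'a::comm_ring_1)"
proof (cases "i \<le> k")
  case True then show ?thesis by (simp add: coeff_linear_poly_power)
next
  case False
  then have "coeff ([:1,1:]^k) i = (0::'a)"
    by (intro coeff_eq_0) (simp add: degree_linear_power)
  then show ?thesis using False by (simp add: binomial_eq_0 not_le)
qed

lemma Wc_pow: "Wc^k = monom 1 k" by (simp add: Wc_def monom_altdef)

lemma coeff_PP_pow: "coeff (PP^m) m = (\<Sum>k\<le>m. monom (int ((m choose k) * (k choose (m-k)))) k)"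
proof -
  have PPe: "PP = Wp * (Xp * [:1,1:]) + 1"
    by (simp add: PP_def Xp_def power2_eq_square algebra_simps)
  have t: "(Wp * (Xp * [:1,1:]))^k = smult (Wc^k) (monom 1 k * [:1,1:]^k)" for k
  proof -
    have "Wp * (Xp * [:1,1:]) = smult Wc (Xp * [:1,1:])" by (simp add: Wp_def)
    then have "(Wp * (Xp * [:1,1:]))^k = smult (Wc^k) (Xp^k * [:1,1:]^k)"
      by (simp only: smult_power power_mult_distrib)
    moreover have "Xp^k = monom 1 k" by (simp add: Xp_def monom_altdef)
    ultimately show ?thesis by simp
  qed
  have "PP^m = (\<Sum>k\<le>m. of_nat (m choose k) * (Wp * (Xp * [:1,1:]))^k * 1^(m-k))"
    unfolding PPe by (rule binomial_ring)
  also have "\<dots> = (\<Sum>k\<le>m. smult (of_nat (m choose k) * Wc^k) (monom 1 k * [:1,1:]^k))"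
    by (rule sum.cong[OF refl]) (simp only: t power_one mult_1_right, simp add: of_nat_poly)
  finally have "coeff (PP^m) m = (\<Sum>k\<le>m. (of_nat (m choose k) * Wc^k) * coeff (monom 1 k * [:1,1:]^k) m)"
    by (simp add: coeff_sum)
  also have "\<dots> = (\<Sum>k\<le>m. monom (int ((m choose k) * (k choose (m-k)))) k)"
  proof (rule sum.cong)
    fix k assume "k \<in> {..m}"
    then have "coeff (monom 1 k * [:1,1:]^k) m = (of_nat (k choose (m-k)) :: int poly)"
      by (simp add: coeff_monom_mult) (rule coeff_lin_pow)
    then show "(of_nat (m choose k) * Wc^k) * coeff (monom 1 k * [:1,1:]^k) m
        = monom (int ((m choose k) * (k choose (m-k)))) k"
      by (simp add: Wc_pow of_nat_poly smult_monom mult_monom)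
  qed simp
  finally show ?thesis .
qed

lemma T_eq: "Lf (coeff (PP^m) m) = (\<Sum>k<m+1. (-1)^k * int ((2*k) choose k) * int (m choose k) * int (k choose (m-k)))"
  unfolding coeff_PP_pow Lf_sum Lf_monom a_def
  by (rule sum.cong) (auto simp: algebra_simps)

lemma S_T: "S (m+3) = Lf (coeff (PP^m) m)"
  unfolding T_eq S_def by simp

definition dw :: "int poly poly \<Rightarrow> int poly poly" where "dw p = map_poly pderiv p"

lemma coeff_dw: "coeff (dw p) n = pderiv (coeff p n)" by (simp add: dw_def coeff_map_poly)

lemma pderiv_sum': "pderiv (sum f A) = (\<Sum>x\<in>A. pderiv (f x))"
  using higher_pderiv_sum[of 1 f A] by simp

lemma dw_add: "dw (p+q) = dw p + dw q" by (rule poly_eqI) (simp add: coeff_dw pderiv_add)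
lemma dw_diff: "dw (p-q) = dw p - dw q" by (rule poly_eqI) (simp add: coeff_dw pderiv_diff)
lemma dw_minus: "dw (-p) = - dw p" by (rule poly_eqI) (simp add: coeff_dw pderiv_minus)
lemma dw_mult: "dw (p*q) = dw p * q + p * dw q"
proof (rule poly_eqI)
  fix n
  have "coeff (dw (p*q)) n = (\<Sum>i\<le>n. coeff p i * pderiv (coeff q (n-i)) + coeff q (n-i) * pderiv (coeff p i))"
    by (simp only: coeff_dw coeff_mult pderiv_sum' pderiv_mult)
  also have "\<dots> = (\<Sum>i\<le>n. pderiv (coeff p i) * coeff q (n-i)) + (\<Sum>i\<le>n. coeff p i * pderiv (coeff q (n-i)))"
    by (simp add: sum.distrib mult.commute add.commute)
  also have "\<dots> = coeff (dw p * q + p * dw q) n"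
    by (simp only: coeff_add coeff_mult coeff_dw)
  finally show "coeff (dw (p*q)) n = coeff (dw p * q + p * dw q) n" .
qed
lemma dw_const: "dw [:c:] = [:pderiv c:]" by (rule poly_eqI) (simp add: coeff_dw coeff_pCons split: nat.split)
lemma dw_1: "dw 1 = 0" by (rule poly_eqI) (simp add: coeff_dw)
lemma dw_numeral: "dw (numeral n) = 0" by (simp add: numeral_poly dw_const)
lemma dw_of_nat: "dw (of_nat n) = 0" by (simp add: of_nat_poly dw_const)
lemma dw_Wp: "dw Wp = 1"
  by (rule poly_eqI) (simp add: Wp_def Wc_def coeff_dw coeff_pCons pderiv_pCons split: nat.split)
lemma dw_Xp: "dw Xp = 0" by (rule poly_eqI) (simp add: Xp_def coeff_dw coeff_pCons split: nat.split)
lemma dw_pow: "dw (p^Suc k) = of_nat (Suc k) * p^k * dw p"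
  by (induction k) (simp_all add: dw_mult algebra_simps)

lemma pd_Xp: "pderiv Xp = 1" by (simp add: Xp_def pderiv_pCons)
lemma pd_Wp: "pderiv Wp = 0" by (simp add: Wp_def)
lemma pd_pow: "pderiv (p^Suc k) = of_nat (Suc k) * p^k * pderiv p"
  by (induction k) (simp_all add: pderiv_mult algebra_simps)

lemma Dw_eq: "map_poly dw1 F = (Wp+2)*F + Wp*(Wp+4)*dw F"
proof -
  have e1: "(Wp+2) = [:Wc+2:]" by (simp add: Wp_def numeral_poly)
  have e2: "Wp*(Wp+4) = [:Wc*(Wc+4):]" by (simp add: Wp_def numeral_poly)
  have e3: "[:2,1:] = Wc + 2" "[:0,4,1:] = Wc*(Wc+4)" by (simp_all add: Wc_def numeral_poly)
  show ?thesis
    by (rule poly_eqI) (simp add: coeff_map_poly dw1_0 e1 e2 coeff_dw dw1_def e3)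
qed

lemma Lf_Dw: "Lf (coeff (map_poly dw1 F) n) = 0"
  by (simp add: coeff_map_poly dw1_0 Lf_dw1)




lemma ident:
  fixes W X Z M P P' U b1 b1' b2 b2' Ap B H F dF :: "'a::comm_ring_1"
  assumes "P = 1 + W*X + W*X^2" and "P' = W + 2*W*X" and "U = X + X^2"
  and "b1 = -1 + 3*X + 6*X^2 + 2*X^3" and "b1' = 3 + 12*X + 6*X^2"
  and "b2 = 1 - 4*X - 3*X^2 + 2*X^3" and "b2' = -4 - 6*X + 6*X^2"
  and "Ap = b1'*Z*P^2 + b1*(M+2)*Z*P*P' + b2'*Z*P + b2*(M+1)*Z*P'"
  and "B = b1*Z*P + b2*Z"
  and "H = -(Z*P^2 - Z*P) + (1+X)*(Z*P^2 - Z)"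
  and "F = U*(-(Z*P*P) + (1+X)*(Z*P*(P+1)))"
  and "dF = U*(-(M+2)*Z*P*U + (1+X)*((M+1)*Z*U*(P+1) + Z*P*U))"
  shows "X*Z*P^2 + 12*X^2*Z*P + 16*X^3*Z =
     X*Ap - (M+3)*(X*P'*B) + ((W+2)*F + W*(W+4)*dF) - (M+3)*((W+4)*U*H)"
  unfolding assms by (simp add: algebra_simps power2_eq_square power3_eq_cube)

lemma coeff_Xp: "coeff (Xp * p) (Suc n) = coeff p n"
  by (simp add: Xp_def)

lemma coeff_const_mult: "coeff ([:c:] * p) n = c * coeff p n" by simp

lemma Lf_of_nat_mult: "Lf (of_nat k * q) = int k * Lf q"
  by (simp add: of_nat_poly Lf_smult)
lemma Lf_numeral_mult: "Lf (numeral k * q) = numeral k * Lf q"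
  by (simp add: numeral_poly Lf_smult)

lemma partc_main: "\<exists>c. S (m+5) + 12 * S (m+4) + 16 * S (m+3) = int (m+3) * c"
proof -
  define Z where "Z = PP^m"
  define M where "M = (of_nat m :: int poly poly)"
  define P' where "P' = Wp + 2*Wp*Xp"
  define U where "U = Xp + Xp^2"
  define b1 :: "int poly poly" where "b1 = -1 + 3*Xp + 6*Xp^2 + 2*Xp^3"
  define b1' :: "int poly poly" where "b1' = 3 + 12*Xp + 6*Xp^2"
  define b2 :: "int poly poly" where "b2 = 1 - 4*Xp - 3*Xp^2 + 2*Xp^3"
  define b2' :: "int poly poly" where "b2' = -4 - 6*Xp + 6*Xp^2"
  define Y where "Y = PP^Suc m"
  have YZ: "Y = Z*PP" by (simp add: Y_def Z_def)
  have hP: "pderiv PP = P'"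
    by (simp add: PP_def P'_def pderiv_add pderiv_mult pd_Xp pd_Wp power2_eq_square algebra_simps)
  have hY: "pderiv Y = (M+1)*Z*P'"
    using pd_pow[of PP m] by (simp add: Y_def Z_def M_def hP algebra_simps)
  have dP: "dw PP = U"
    by (simp add: PP_def U_def dw_add dw_mult dw_Wp dw_Xp dw_1 power2_eq_square algebra_simps)
  have dY: "dw Y = (M+1)*Z*U"
    using dw_pow[of PP m] by (simp add: Y_def Z_def M_def dP algebra_simps)
  have hb1: "pderiv b1 = b1'"
    by (simp add: b1_def b1'_def pderiv_add pderiv_diff pderiv_minus pderiv_mult pd_Xp
        power2_eq_square power3_eq_cube algebra_simps)
  have hb2: "pderiv b2 = b2'"
    by (simp add: b2_def b2'_def pderiv_add pderiv_diff pderiv_minus pderiv_mult pd_Xp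
        power2_eq_square power3_eq_cube algebra_simps)
  define A where "A = b1*(Y*PP) + b2*Y"
  define Ap where "Ap = b1'*Z*PP^2 + b1*(M+2)*Z*PP*P' + b2'*Z*PP + b2*(M+1)*Z*P'"
  have pA: "pderiv A = Ap"
    unfolding A_def Ap_def
    by (simp only: pderiv_add pderiv_mult hb1 hb2 hY hP) (simp add: YZ algebra_simps power2_eq_square)
  define B where "B = b1*Z*PP + b2*Z"
  define H where "H = -(Z*PP^2 - Z*PP) + (1+Xp)*(Z*PP^2 - Z)"
  define F where "F = U*(-(Z*PP*PP) + (1+Xp)*(Z*PP*(PP+1)))"
  define dF where "dF = U*(-(M+2)*Z*PP*U + (1+Xp)*((M+1)*Z*U*(PP+1) + Z*PP*U))"
  have dU: "dw U = 0" by (simp add: U_def dw_add dw_mult dw_Xp power2_eq_square)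
  have dX1: "dw (1+Xp) = 0" by (simp add: dw_add dw_Xp dw_1)
  have hF: "dw F = dF"
  proof -
    have "F = U*(-(Y*PP) + (1+Xp)*(Y*(PP+1)))" by (simp add: F_def YZ)
    then have "dw F = U*(-(dw Y*PP + Y*dw PP) + (1+Xp)*(dw Y*(PP+1) + Y*dw PP))"
      by (simp only: dw_mult dw_add dw_minus dU dX1 dw_1 dw_Xp) (simp add: algebra_simps)
    then show ?thesis unfolding dF_def dY dP by (simp add: YZ algebra_simps)
  qed
  have Q: "Xp*Z*PP^2 + 12*Xp^2*Z*PP + 16*Xp^3*Z =
     Xp*Ap - (M+3)*(Xp*P'*B) + ((Wp+2)*F + Wp*(Wp+4)*dF) - (M+3)*((Wp+4)*U*H)"
    by (rule ident[OF PP_def P'_def U_def b1_def b1'_def b2_def b2'_def Ap_def B_def H_def F_def dF_def])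
  have M3: "M + 3 = [:of_nat (m+3):]" by (simp add: M_def of_nat_poly numeral_poly)
  have Q2: "Xp*Z*PP^2 + 12*Xp^2*Z*PP + 16*Xp^3*Z =
     Xp*pderiv A - smult (of_nat (m+3)) (Xp*P'*B) + map_poly dw1 F - smult (of_nat (m+3)) ((Wp+4)*U*H)"
    using Q unfolding pA Dw_eq hF M3 by simp
  have L1: "Lf (coeff (Xp*Z*PP^2 + 12*Xp^2*Z*PP + 16*Xp^3*Z) (m+3)) = S (m+5) + 12 * S (m+4) + 16 * S (m+3)"
  proof -
    have e: "Xp*Z*PP^2 + 12*Xp^2*Z*PP + 16*Xp^3*Z =
        Xp * PP^(m+2) + 12 * (Xp * (Xp * PP^(m+1))) + 16 * (Xp * (Xp * (Xp * PP^m)))"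
      by (simp add: Z_def power_add algebra_simps power2_eq_square power3_eq_cube)
    have "m+5 = (m+2)+3" by simp
    then have s5: "S (m+5) = Lf (coeff (PP^(m+2)) (m+2))" using S_T[of "m+2"] by (simp only:)
    have "m+4 = (m+1)+3" by simp
    then have s4: "S (m+4) = Lf (coeff (PP^(m+1)) (m+1))" using S_T[of "m+1"] by (simp only:)
    have s3: "S (m+3) = Lf (coeff (PP^m) m)" using S_T[of m] by simp
    have n: "m+3 = Suc (Suc (Suc m))" by simp
    show ?thesis unfolding e s5 s4 s3 unfolding n
      by (simp add: Lf_add Lf_numeral_mult coeff_Xp numeral_poly Lf_smult)
  qed
  have L2: "Lf (coeff (Xp*pderiv A - smult (of_nat (m+3)) (Xp*P'*B) + map_poly dw1 F - smult (of_nat (m+3)) ((Wp+4)*U*H)) (m+3))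
     = int (m+3) * (Lf (coeff A (m+3)) - Lf (coeff (Xp*P'*B) (m+3)) - Lf (coeff ((Wp+4)*U*H) (m+3)))"
  proof -
    have n: "m+3 = Suc (m+2)" by simp
    have c1: "coeff (Xp*pderiv A) (m+3) = of_nat (m+3) * coeff A (m+3)"
      unfolding n coeff_Xp coeff_pderiv by simp
    show ?thesis
      by (simp only: coeff_add coeff_diff coeff_smult c1 Lf_add Lf_diff Lf_of_nat_mult Lf_Dw)
         (simp add: algebra_simps)
  qed
  show ?thesis using L1 L2 Q2 by metis
qed




fun R :: "nat \<Rightarrow> nat" where
  "R 0 = 1"
| "R (Suc k) = R k * (3*k+1) * (3*k+2)"

lemma fact3: "fact (3*k) = 3^k * fact k * R k"
proof (induction k)
  case 0 then show ?case by simp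
next
  case (Suc k)
  have "fact (3 * Suc k) = fact (3*k) * (3*k+1) * (3*k+2) * (3*k+3)"
    by (simp add: fact_Suc algebra_simps numeral_3_eq_3)
  also have "\<dots> = 3^(Suc k) * fact (Suc k) * R (Suc k)"
    using Suc by (simp add: algebra_simps fact_Suc)
  finally show ?case .
qed

lemma C6: "((2*k) choose k) * R (2*k) = ((6*k) choose (3*k)) * (R k)^2"
proof -
  have e1: "fact (3*k) * fact (3*k) * ((6*k) choose (3*k)) = (fact (6*k) :: nat)"
    using binomial_fact_lemma[of "3*k" "6*k"] by simp
  have e2: "fact k * fact k * ((2*k) choose k) = (fact (2*k) :: nat)"
    using binomial_fact_lemma[of "k" "2*k"] by simp
  have f6: "(fact (6*k) :: nat) = 3^(2*k) * fact (2*k) * R (2*k)"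
    using fact3[of "2*k"] by (simp add: mult.assoc)
  have "(3^(2*k) * fact k * fact k) * ((R k)^2 * ((6*k) choose (3*k)))
      = (3^(2*k) * fact k * fact k) * (((2*k) choose k) * R (2*k))"
  proof -
    have "(3^(2*k) * fact k * fact k) * ((R k)^2 * ((6*k) choose (3*k)))
        = (3^k * fact k * R k) * (3^k * fact k * R k) * ((6*k) choose (3*k))"
      by (simp add: power_mult power2_eq_square algebra_simps)
    also have "\<dots> = fact (6*k)" using e1 fact3[of k] by simp
    also have "\<dots> = 3^(2*k) * (fact k * fact k * ((2*k) choose k)) * R (2*k)"
      using f6 e2 by simp
    finally show ?thesis by (simp add: algebra_simps)
  qed
  moreover have "(3^(2*k) * fact k * fact k :: nat) \<noteq> 0" by simp
  ultimately show ?thesis by (simp add: mult.commute)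
qed

lemma R_mod3: "[int (R k) = 2^k] (mod 3)"
proof (induction k)
  case 0 then show ?case by simp
next
  case (Suc k)
  have "int (R (Suc k)) = int (R k) * (9*int k*int k + 9 * int k + 2)"
    by (simp add: algebra_simps)
  moreover have "[int (R k) * (9*int k*int k + 9 * int k + 2) = 2^k * 2] (mod 3)"
  proof (rule cong_mult[OF Suc])
    have "9*int k*int k + 9 * int k + 2 = 3 * (3*int k*int k + 3*int k) + 2" by simp
    then show "[9*int k*int k + 9 * int k + 2 = 2] (mod 3)"
      by (simp add: cong_iff_dvd_diff)
  qed
  ultimately show ?case by (simp add: mult.commute)
qed

lemma four_pow_mod3: "[(4::int)^k = 1] (mod 3)"
proof -
  have "[(4::int) = 1] (mod 3)" by (simp add: cong_iff_dvd_diff)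
  then show ?thesis using cong_pow by fastforce
qed

lemma a3k: "[a (3*k) = a k] (mod 3)"
proof -
  have h: "int ((2*k) choose k) * int (R (2*k)) = int ((6*k) choose (3*k)) * int (R k)^2"
    using arg_cong[OF C6[of k], of int] by simp
  have r2: "[int (R (2*k)) = 1] (mod 3)"
    using R_mod3[of "2*k"] four_pow_mod3[of k] by (simp add: power_mult cong_trans)
  have r1: "[int (R k)^2 = 1] (mod 3)"
  proof -
    have "[int (R k)^2 = (2^k)^2] (mod 3)" using R_mod3 cong_pow by blast
    moreover have "((2::int)^k)^2 = 4^k"
    proof -
      have "((2::int)^k)^2 = (2*2)^k" by (simp only: power2_eq_square power_mult_distrib)
      then show ?thesis by simp
    qed
    ultimately show ?thesis using four_pow_mod3 cong_trans by metis
  qed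
  have "[int ((2*k) choose k) * int (R (2*k)) = int ((2*k) choose k) * 1] (mod 3)"
    using r2 cong_scalar_left by blast
  moreover have "[int ((6*k) choose (3*k)) * int (R k)^2 = int ((6*k) choose (3*k)) * 1] (mod 3)"
    using r1 cong_scalar_left by blast
  ultimately have "[int ((2*k) choose k) = int ((6*k) choose (3*k))] (mod 3)"
    using h by (metis cong_sym cong_trans mult_1_right)
  then have c: "[int ((2*(3*k)) choose (3*k)) = int ((2*k) choose k)] (mod 3)"
    by (simp add: cong_sym mult.assoc)
  have m1: "(-1::int)^(3*k) = (-1)^k"
    by (simp add: power_mult)
  show ?thesis unfolding a_def m1 by (rule cong_scalar_left[OF c])
qed

lemma a3k1: "[a (3*k+1) = a (3*k)] (mod 3)"
proof -
  have r: "int (Suc (3*k)) * a (Suc (3*k)) = - (4 * int (3*k) + 2) * a (3*k)" by (rule a_rec)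
  have "a (3*k+1) - a (3*k) = 3 * (-(4*int k+1)*a (3*k) - int k * a (3*k+1))"
    using r by (simp add: algebra_simps)
  then show ?thesis by (simp add: cong_iff_dvd_diff)
qed

lemma a3k2: "[a (3*k+2) = 0] (mod 3)"
proof -
  have r: "int (Suc (Suc (3*k))) * a (Suc (Suc (3*k))) = - (4 * int (Suc (3*k)) + 2) * a (Suc (3*k))"
    by (rule a_rec)
  have "a (3*k+2) = 3 * (a (3*k+2) + (4 * int k + 2) * a (3*k+1) + int k * a (3*k+2))"
    using r by (simp add: algebra_simps)
  then show ?thesis by (metis cong_0_iff dvd_triv_left)
qed




definition mon :: "int \<Rightarrow> nat \<Rightarrow> nat \<Rightarrow> int poly poly" where
  "mon c u v = monom (monom c u) v"

lemma mon_mult: "mon c u v * mon d e f = mon (c*d) (u+e) (v+f)"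
  by (simp add: mon_def mult_monom)

lemma Wp_mon: "Wp = mon 1 1 0" by (simp add: mon_def Wp_def Wc_def monom_0 monom_Suc)
lemma Xp_mon: "Xp = mon 1 0 1" by (simp add: mon_def Xp_def monom_0 monom_Suc one_pCons)
lemma one_mon: "1 = mon 1 0 0" by (simp add: mon_def monom_0 one_pCons)

lemma mon_pow: "(mon c u v)^k = mon (c^k) (u*k) (v*k)"
  by (induction k) (simp_all add: one_mon mon_mult algebra_simps)

lemma Lf_coeff_mon: "Lf (coeff (mon c u v) j) = (if j = v then c * a u else 0)"
  by (simp add: mon_def coeff_monom Lf_monom)

lemma mon_add: "mon c u v + mon d u v = mon (c+d) u v"
  by (simp add: mon_def add_monom)

definition P3 :: "int poly poly" where "P3 = 1 + Wp^3*Xp^3 + Wp^3*Xp^6"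

lemma PP3: "PP^3 = P3 + 3 * (Wp*(Xp+Xp^2) + Wp^2*(Xp+Xp^2)^2 + Wp^3*(Xp^4+Xp^5))"
  unfolding PP_def P3_def by (simp add: algebra_simps power2_eq_square power3_eq_cube
     numeral_eq_Suc)

lemma pow_3: "\<exists>G. (x + 3*y)^q = x^q + 3*(G::'a::comm_ring_1)"
proof (induction q)
  case 0 then show ?case by (intro exI[of _ 0]) simp
next
  case (Suc q)
  then obtain G where G: "(x + 3*y)^q = x^q + 3*G" by blast
  have "(x + 3*y)^Suc q = (x^q + 3*G) * (x + 3*y)" by (simp only: power_Suc2 G)
  also have "\<dots> = x^Suc q + 3*(x^q*y + G*x + 3*G*y)" by (simp add: algebra_simps)
  finally have "(x + 3*y)^Suc q = x^Suc q + 3*(x^q*y + G*x + 3*G*y)" .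
  then show ?case by blast
qed

lemma P3_pow: "P3^q = (\<Sum>k\<le>q. \<Sum>i\<le>k. mon (int ((q choose k) * (k choose i))) (3*k) (3*k+3*i))"
proof -
  have e: "P3 = Wp^3*Xp^3*(Xp^3+1) + 1" by (simp add: P3_def algebra_simps power_add[symmetric])
  have "P3^q = (\<Sum>k\<le>q. of_nat (q choose k) * (Wp^3*Xp^3*(Xp^3+1))^k * 1^(q-k))"
    unfolding e by (rule binomial_ring)
  also have "\<dots> = (\<Sum>k\<le>q. \<Sum>i\<le>k. mon (int ((q choose k) * (k choose i))) (3*k) (3*k+3*i))"
  proof (rule sum.cong[OF refl])
    fix k
    have x1: "(Xp^3+1)^k = (\<Sum>i\<le>k. of_nat (k choose i) * (Xp^3)^i * 1^(k-i))"
      by (rule binomial_ring)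
    have ofn: "(of_nat n :: int poly poly) = mon (int n) 0 0" for n
      by (simp add: mon_def of_nat_poly monom_0)
    show "of_nat (q choose k) * (Wp^3*Xp^3*(Xp^3+1))^k * 1^(q-k)
        = (\<Sum>i\<le>k. mon (int ((q choose k) * (k choose i))) (3*k) (3*k+3*i))"
      unfolding power_mult_distrib x1
      by (simp add: sum_distrib_left Wp_mon Xp_mon ofn mon_pow mon_mult algebra_simps)
  qed
  finally show ?thesis .
qed




lemma PP_split: "\<exists>G. PP^(3*q+r) = P3^q * PP^r + 3*G"
proof -
  obtain G where G: "(P3 + 3*(Wp*(Xp+Xp^2) + Wp^2*(Xp+Xp^2)^2 + Wp^3*(Xp^4+Xp^5)))^q = P3^q + 3*G"
    using pow_3 by blast
  have "PP^(3*q+r) = (PP^3)^q * PP^r" by (simp add: power_add power_mult)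
  also have "\<dots> = (P3^q + 3*G) * PP^r" unfolding PP3 G ..
  also have "\<dots> = P3^q * PP^r + 3*(G*PP^r)" by (simp add: algebra_simps)
  finally show ?thesis by blast
qed

lemma Lf_coeff_3: "Lf (coeff (X + 3*G) j) = Lf (coeff X j) + 3 * Lf (coeff G j)"
  by (simp add: numeral_poly Lf_add Lf_smult)

lemma cong_P3: "[Lf (coeff (PP^(3*q+r)) j) = Lf (coeff (P3^q * PP^r) j)] (mod 3)"
proof -
  obtain G where G: "PP^(3*q+r) = P3^q * PP^r + 3*G" using PP_split by blast
  show ?thesis unfolding G Lf_coeff_3 by (simp add: cong_iff_dvd_diff)
qed

lemma Lf_P3_mon: "Lf (coeff (P3^q * mon d u v) j) =
   (\<Sum>k\<le>q. \<Sum>i\<le>k. if 3*k+3*i+v = j then int ((q choose k) * (k choose i)) * d * a (3*k+u) else 0)"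
  unfolding P3_pow sum_distrib_right mon_mult coeff_sum Lf_sum Lf_coeff_mon
  by (intro sum.cong refl) (auto simp: algebra_simps)

lemma collapse: "(\<Sum>k\<le>q. \<Sum>i\<le>k. if 3*k+3*i+v = 3*q+v then int ((q choose k) * (k choose i)) * d * f k else 0)
   = (\<Sum>k\<le>q. int ((q choose k) * (k choose (q-k))) * d * f k)"
proof (rule sum.cong[OF refl])
  fix k assume k: "k \<in> {..q}"
  have "(\<Sum>i\<le>k. if 3*k+3*i+v = 3*q+v then int ((q choose k) * (k choose i)) * d * f k else 0)
      = (\<Sum>i\<le>k. if i = q-k then int ((q choose k) * (k choose i)) * d * f k else 0)"
    by (rule sum.cong[OF refl]) (use k in auto)
  also have "\<dots> = int ((q choose k) * (k choose (q-k))) * d * f k"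
    by (simp add: binomial_eq_0)
  finally show "(\<Sum>i\<le>k. if 3*k+3*i+v = 3*q+v then int ((q choose k) * (k choose i)) * d * f k else 0)
      = int ((q choose k) * (k choose (q-k))) * d * f k" .
qed

lemma vanish: "(\<And>k i. 3*k+3*i+v \<noteq> j) \<Longrightarrow>
  (\<Sum>k\<le>q. \<Sum>i\<le>k. if 3*k+3*i+v = j then (g k i :: int) else 0) = 0"
  by simp

lemma T_eq': "Lf (coeff (PP^q) q) = (\<Sum>k\<le>q. int ((q choose k) * (k choose (q-k))) * a k)"
  unfolding coeff_PP_pow Lf_sum Lf_monom by simp




lemma mon_eq: "Lf (coeff (P3^q * mon d u w) (3*q+w)) = (\<Sum>k\<le>q. int ((q choose k) * (k choose (q-k))) * d * a (3*k+u))"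
  unfolding Lf_P3_mon by (rule collapse)

lemma mon_ne: "v mod 3 \<noteq> w mod 3 \<Longrightarrow> Lf (coeff (P3^q * mon d u v) (3*q+w)) = 0"
  unfolding Lf_P3_mon
proof (intro sum.neutral ballI)
  fix k i assume "v mod 3 \<noteq> w mod 3"
  then have "3*k+3*i+v \<noteq> 3*q+w" by presburger
  then show "(if 3*k+3*i+v = 3*q+w then int ((q choose k) * (k choose i)) * d * a (3*k+u) else 0) = 0"
    by simp
qed

lemma PP_mon: "PP = mon 1 0 0 + mon 1 1 1 + mon 1 1 2"
  by (simp add: PP_def Wp_mon Xp_mon one_mon mon_mult mon_pow numeral_2_eq_2)

abbreviation Tn :: "nat \<Rightarrow> int" where "Tn q \<equiv> Lf (coeff (PP^q) q)"

abbreviation Sg :: "(nat \<Rightarrow> int) \<Rightarrow> nat \<Rightarrow> int" where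
  "Sg f q \<equiv> (\<Sum>k\<le>q. int ((q choose k) * (k choose (q-k))) * f k)"

lemma r0: "[Tn (3*q) = Sg (\<lambda>k. a (3*k)) q] (mod 3)"
proof -
  have "[Tn (3*q+0) = Lf (coeff (P3^q * PP^0) (3*q+0))] (mod 3)" by (rule cong_P3)
  moreover have "Lf (coeff (P3^q * PP^0) (3*q+0)) = Sg (\<lambda>k. a (3*k)) q"
  proof -
    have "P3^q * PP^0 = P3^q * mon 1 0 0" by (simp add: one_mon[symmetric])
    then show ?thesis by (simp only: mon_eq) simp
  qed
  ultimately show ?thesis by simp
qed

lemma r1: "[Tn (3*q+1) = Sg (\<lambda>k. a (3*k+1)) q] (mod 3)"
proof -
  have "[Tn (3*q+1) = Lf (coeff (P3^q * PP^1) (3*q+1))] (mod 3)" by (rule cong_P3)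
  moreover have "Lf (coeff (P3^q * PP^1) (3*q+1)) = Sg (\<lambda>k. a (3*k+1)) q"
  proof -
    have e: "P3^q * PP^1 = P3^q * mon 1 0 0 + P3^q * mon 1 1 1 + P3^q * mon 1 1 2"
      by (simp add: PP_mon algebra_simps)
    have z1: "Lf (coeff (P3^q * mon 1 0 0) (3*q+1)) = 0" by (rule mon_ne) simp
    have z2: "Lf (coeff (P3^q * mon 1 1 2) (3*q+1)) = 0" by (rule mon_ne) simp
    show ?thesis unfolding e coeff_add Lf_add z1 z2 mon_eq by simp
  qed
  ultimately show ?thesis by simp
qed

lemma r2: "[Tn (3*q+2) = Sg (\<lambda>k. 2 * a (3*k+1) + a (3*k+2)) q] (mod 3)"
proof -
  have "[Tn (3*q+2) = Lf (coeff (P3^q * PP^2) (3*q+2))] (mod 3)" by (rule cong_P3)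
  moreover have "Lf (coeff (P3^q * PP^2) (3*q+2)) = Sg (\<lambda>k. 2 * a (3*k+1) + a (3*k+2)) q"
  proof -
    have four: "(4::nat) = Suc (Suc (Suc (Suc 0)))" by simp
    have e: "P3^q * PP^2 = P3^q * mon 1 0 0 + P3^q * mon 1 1 1 + P3^q * mon 1 1 2
       + P3^q * mon 1 1 1 + P3^q * mon 1 2 2 + P3^q * mon 1 2 3
       + P3^q * mon 1 1 2 + P3^q * mon 1 2 3 + P3^q * mon 1 2 4"
      by (simp add: PP_mon power2_eq_square mon_mult algebra_simps numeral_2_eq_2 numeral_3_eq_3 four)
    have z1: "Lf (coeff (P3^q * mon 1 0 0) (3*q+2)) = 0" by (rule mon_ne) simp
    have z2: "Lf (coeff (P3^q * mon 1 1 1) (3*q+2)) = 0" by (rule mon_ne) simp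
    have z3: "Lf (coeff (P3^q * mon 1 2 3) (3*q+2)) = 0" by (rule mon_ne) simp
    have z4: "Lf (coeff (P3^q * mon 1 2 4) (3*q+2)) = 0" by (rule mon_ne) simp
    show ?thesis unfolding e coeff_add Lf_add z1 z2 z3 z4 mon_eq
      by (simp add: sum.distrib[symmetric] algebra_simps)
  qed
  ultimately show ?thesis by simp
qed




lemma Tn_Sg: "Tn q = Sg a q"
  unfolding coeff_PP_pow Lf_sum Lf_monom by (simp add: mult.commute)

lemma c0: "[Sg (\<lambda>k. a (3*k)) q = Sg a q] (mod 3)"
  by (intro cong_sum cong_scalar_left a3k)

lemma c1: "[Sg (\<lambda>k. a (3*k+1)) q = Sg a q] (mod 3)"
  by (intro cong_sum cong_scalar_left) (rule cong_trans[OF a3k1 a3k])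

lemma c2: "[Sg (\<lambda>k. 2 * a (3*k+1) + a (3*k+2)) q = 2 * Sg a q] (mod 3)"
proof -
  have "[Sg (\<lambda>k. 2 * a (3*k+1) + a (3*k+2)) q = Sg (\<lambda>k. 2 * a k + 0) q] (mod 3)"
    by (intro cong_sum cong_scalar_left cong_add) (rule cong_trans[OF a3k1 a3k], rule a3k2)
  moreover have "Sg (\<lambda>k. 2 * a k + 0) q = 2 * Sg a q"
    by (simp add: sum_distrib_left algebra_simps)
  ultimately show ?thesis by simp
qed

lemma parta: "[S (3*n) = S (3*n+1)] (mod 3) \<and> [S (3*n+1) = - S (3*n+2)] (mod 3)"
proof (cases n)
  case 0
  then show ?thesis by (simp add: S_def)
next
  case (Suc q)
  have e0: "S (3*n) = Tn (3*q)" using S_T[of "3*q"] Suc by (simp add: add.commute)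
  have e1: "S (3*n+1) = Tn (3*q+1)" using S_T[of "3*q+1"] Suc by (simp add: add.commute)
  have e2: "S (3*n+2) = Tn (3*q+2)" using S_T[of "3*q+2"] Suc by (simp add: add.commute)
  have t0: "[Tn (3*q) = Tn q] (mod 3)" using cong_trans[OF r0 c0] by (simp only: Tn_Sg)
  have t1: "[Tn (3*q+1) = Tn q] (mod 3)" using cong_trans[OF r1 c1] by (simp only: Tn_Sg)
  have t2: "[Tn (3*q+2) = 2 * Tn q] (mod 3)" using cong_trans[OF r2 c2] by (simp only: Tn_Sg)
  have A: "[Tn (3*q) = Tn (3*q+1)] (mod 3)" using cong_trans[OF t0 cong_sym[OF t1]] .
  have "[- Tn (3*q+2) = - (2 * Tn q)] (mod 3)" using t2 cong_minus_minus_iff by blast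
  moreover have "[- (2 * Tn q) = Tn q] (mod 3)" by (simp add: cong_iff_dvd_diff)
  ultimately have "[- Tn (3*q+2) = Tn q] (mod 3)" using cong_trans by blast
  then have B: "[Tn (3*q+1) = - Tn (3*q+2)] (mod 3)" using cong_trans[OF t1 cong_sym] by blast
  show ?thesis using A B e0 e1 e2 by simp
qed

lemma partc: "n > 0 \<Longrightarrow> [S (n+2) + 12 * S (n+1) + 16 * S n = 0] (mod int n)"
proof -
  assume n: "n > 0"
  consider "n = 1" | "n = 2" | "n \<ge> 3" using n by linarith
  then show ?thesis
  proof cases
    case 1 then show ?thesis by simp
  next
    case 2
    have "S 4 = -2" "S 3 = 1" "S 2 = 0" by (simp_all add: S_def numeral_eq_Suc)
    then show ?thesis using 2 by (simp add: cong_0_iff)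
  next
    case 3
    then obtain m where m: "n = m + 3" by (metis add.commute le_iff_add)
    obtain c where c: "S (m+5) + 12 * S (m+4) + 16 * S (m+3) = int (m+3) * c"
      using partc_main by blast
    have n2: "n+2 = m+5" "n+1 = m+4" using m by simp_all
    have eq: "S (n+2) + 12 * S (n+1) + 16 * S n = int n * c"
      unfolding n2 using c m by (simp only:)
    show ?thesis unfolding cong_0_iff eq by simp
  qed
qed

theorem lemma4:
  shows "(\<forall>n::nat. [S (3*n) = S (3*n+1)] (mod 3) \<and> [S (3*n+1) = - S (3*n+2)] (mod 3))
    \<and> (\<forall>n::nat. [S (4*n+2) = 0] (mod 4))
    \<and> (\<forall>n::nat. n > 0 \<longrightarrow> [S (n+2) + 12 * S (n+1) + 16 * S n = 0] (mod int n))"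
  using parta partb partc by blast


end
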